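(* Let $\mathcal G$ be an ample groupoid and define the relation $\rho$ on $A_{\mathbb B}(\mathcal G)$ by $f\,\rho\,g$ iff $\operatorname{Eq}(f,g)=\{\alpha\in\mathcal G: f(\alpha)=g(\alpha)\}$ is dense in $\mathcal G$. Then (1) $\rho$ is a congruence on $A_{\mathbb B}(\mathcal G)$; (2) if in addition $\mathcal G$ is topologically principal, then $\rho$ coincides with the congruence $\equiv$ on $A_{\mathbb B}(\mathcal G)$.
   Context: $\mathbb B=(\{0,1\},\text{or},\text{and})$ is the Boolean semifield. An ample groupoid is a topological groupoid whose unit space $\mathcal G^{(0)}$ is locally compact Hausdorff and totally disconnected and whose source and range maps $s,r$ are local homeomorphisms ($\mathcal G$ need not be Hausdorff). The Steinberg algebra $A_{\mathbb B}(\mathcal G)$ is the set of $\mathbb B$-valued functions on $\mathcal G$ that are finite sums of characteristic functions $1_U$ of compact open bisections, with pointwise addition and convolution $(f*g)(\gamma)=\sum_{\alpha\beta=\gamma}f(\alpha)g(\beta)$. $\mathcal T$ is the set of units $u$ whose isotropy group $\{\gamma:s(\gamma)=r(\gamma)=u\}$ is trivial; $\mathcal G$ is topologically principal if $\mathcal T$ is dense in $\mathcal G^{(0)}$. The relation $\equiv$ is defined by $f\equiv g$ iff $f(\alpha)=g(\alpha)$ for all $\alpha$ with $s(\alpha),r(\alpha)\in\mathcal T$. A congruence is an equivalence relation compatible with addition and with left and right multiplication. *)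

theory Defs
  imports "HOL-Analysis.Analysis"
begin

text \<open>A topological groupoid is given by a topology T on the arrows (carrier topspace T),
  a set of units G0, source s, range r, a partial multiplication mu (meaningful when
  s a = r b) and an inversion iv.\<close>

definition composable_pairs ::
  "'a topology \<Rightarrow> ('a \<Rightarrow> 'a) \<Rightarrow> ('a \<Rightarrow> 'a) \<Rightarrow> ('a \<times> 'a) set" where
  "composable_pairs T s r = {(a, b). a \<in> topspace T \<and> b \<in> topspace T \<and> s a = r b}"

definition groupoid ::
  "'a topology \<Rightarrow> 'a set \<Rightarrow> ('a \<Rightarrow> 'a) \<Rightarrow> ('a \<Rightarrow> 'a) \<Rightarrow> ('a \<Rightarrow> 'a \<Rightarrow> 'a) \<Rightarrow> ('a \<Rightarrow> 'a) \<Rightarrow> bool" where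
  "groupoid T G0 s r mu iv \<longleftrightarrow>
     (let G = topspace T in
      G0 \<subseteq> G \<and>
      (\<forall>a\<in>G. s a \<in> G0 \<and> r a \<in> G0) \<and>
      (\<forall>u\<in>G0. s u = u \<and> r u = u) \<and>
      (\<forall>a\<in>G. \<forall>b\<in>G. s a = r b \<longrightarrow>
          mu a b \<in> G \<and> s (mu a b) = s b \<and> r (mu a b) = r a) \<and>
      (\<forall>a\<in>G. \<forall>b\<in>G. \<forall>c\<in>G. s a = r b \<and> s b = r c \<longrightarrow>
          mu (mu a b) c = mu a (mu b c)) \<and>
      (\<forall>a\<in>G. mu (r a) a = a \<and> mu a (s a) = a) \<and>
      (\<forall>a\<in>G. iv a \<in> G \<and> s (iv a) = r a \<and> r (iv a) = s a \<and>
          mu a (iv a) = r a \<and> mu (iv a) a = s a))"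

definition topological_groupoid ::
  "'a topology \<Rightarrow> 'a set \<Rightarrow> ('a \<Rightarrow> 'a) \<Rightarrow> ('a \<Rightarrow> 'a) \<Rightarrow> ('a \<Rightarrow> 'a \<Rightarrow> 'a) \<Rightarrow> ('a \<Rightarrow> 'a) \<Rightarrow> bool" where
  "topological_groupoid T G0 s r mu iv \<longleftrightarrow>
     groupoid T G0 s r mu iv \<and>
     continuous_map (subtopology (prod_topology T T) (composable_pairs T s r)) T
        (\<lambda>(a, b). mu a b) \<and>
     continuous_map T T iv"

definition local_homeomorphism_map :: "'a topology \<Rightarrow> 'b topology \<Rightarrow> ('a \<Rightarrow> 'b) \<Rightarrow> bool" where
  "local_homeomorphism_map X Y f \<longleftrightarrow>
     f ` topspace X \<subseteq> topspace Y \<and>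
     (\<forall>x\<in>topspace X. \<exists>U. openin X U \<and> x \<in> U \<and> openin Y (f ` U) \<and>
        homeomorphic_map (subtopology X U) (subtopology Y (f ` U)) f)"

definition totally_disconnected_space :: "'a topology \<Rightarrow> bool" where
  "totally_disconnected_space X \<longleftrightarrow>
     (\<forall>S. connectedin X S \<longrightarrow> (\<exists>x. S \<subseteq> {x}))"

definition ample_groupoid ::
  "'a topology \<Rightarrow> 'a set \<Rightarrow> ('a \<Rightarrow> 'a) \<Rightarrow> ('a \<Rightarrow> 'a) \<Rightarrow> ('a \<Rightarrow> 'a \<Rightarrow> 'a) \<Rightarrow> ('a \<Rightarrow> 'a) \<Rightarrow> bool" where
  "ample_groupoid T G0 s r mu iv \<longleftrightarrow>
     topological_groupoid T G0 s r mu iv \<and>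
     locally_compact_space (subtopology T G0) \<and>
     Hausdorff_space (subtopology T G0) \<and>
     totally_disconnected_space (subtopology T G0) \<and>
     local_homeomorphism_map T (subtopology T G0) s \<and>
     local_homeomorphism_map T (subtopology T G0) r"

definition compact_open_bisection ::
  "'a topology \<Rightarrow> ('a \<Rightarrow> 'a) \<Rightarrow> ('a \<Rightarrow> 'a) \<Rightarrow> 'a set \<Rightarrow> bool" where
  "compact_open_bisection T s r U \<longleftrightarrow>
     openin T U \<and> compactin T U \<and> inj_on s U \<and> inj_on r U"

text \<open>Steinberg algebra over the Boolean semifield (values in bool, addition = or,
  multiplication = and): finite sums of characteristic functions of compact open bisections.\<close>
definition steinberg_B ::
  "'a topology \<Rightarrow> ('a \<Rightarrow> 'a) \<Rightarrow> ('a \<Rightarrow> 'a) \<Rightarrow> ('a \<Rightarrow> bool) set" where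
  "steinberg_B T s r =
     {f. \<exists>F. finite F \<and> (\<forall>U\<in>F. compact_open_bisection T s r U) \<and>
            f = (\<lambda>x. \<exists>U\<in>F. x \<in> U)}"

definition B_add :: "('a \<Rightarrow> bool) \<Rightarrow> ('a \<Rightarrow> bool) \<Rightarrow> 'a \<Rightarrow> bool" where
  "B_add f g = (\<lambda>x. f x \<or> g x)"

text \<open>Convolution: (f*g)(\<gamma>) = sum over \<alpha>\<beta> = \<gamma> of f(\<alpha>)g(\<beta>), with Boolean sum = exists.\<close>
definition B_conv ::
  "'a topology \<Rightarrow> ('a \<Rightarrow> 'a) \<Rightarrow> ('a \<Rightarrow> 'a) \<Rightarrow> ('a \<Rightarrow> 'a \<Rightarrow> 'a) \<Rightarrow>
   ('a \<Rightarrow> bool) \<Rightarrow> ('a \<Rightarrow> bool) \<Rightarrow> 'a \<Rightarrow> bool" where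
  "B_conv T s r mu f g = (\<lambda>\<gamma>. \<exists>\<alpha>\<in>topspace T. \<exists>\<beta>\<in>topspace T.
       s \<alpha> = r \<beta> \<and> mu \<alpha> \<beta> = \<gamma> \<and> f \<alpha> \<and> g \<beta>)"

definition congruence_on ::
  "'f set \<Rightarrow> ('f \<Rightarrow> 'f \<Rightarrow> 'f) \<Rightarrow> ('f \<Rightarrow> 'f \<Rightarrow> 'f) \<Rightarrow> ('f \<Rightarrow> 'f \<Rightarrow> bool) \<Rightarrow> bool" where
  "congruence_on A add mul R \<longleftrightarrow>
     (\<forall>f\<in>A. R f f) \<and>
     (\<forall>f\<in>A. \<forall>g\<in>A. R f g \<longrightarrow> R g f) \<and>
     (\<forall>f\<in>A. \<forall>g\<in>A. \<forall>h\<in>A. R f g \<and> R g h \<longrightarrow> R f h) \<and>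
     (\<forall>f\<in>A. \<forall>g\<in>A. \<forall>h\<in>A. R f g \<longrightarrow>
        R (add f h) (add g h) \<and> R (mul h f) (mul h g) \<and> R (mul f h) (mul g h))"

definition rho_rel :: "'a topology \<Rightarrow> ('a \<Rightarrow> bool) \<Rightarrow> ('a \<Rightarrow> bool) \<Rightarrow> bool" where
  "rho_rel T f g \<longleftrightarrow> T closure_of {\<alpha> \<in> topspace T. f \<alpha> = g \<alpha>} = topspace T"

definition trivial_isotropy_units ::
  "'a topology \<Rightarrow> 'a set \<Rightarrow> ('a \<Rightarrow> 'a) \<Rightarrow> ('a \<Rightarrow> 'a) \<Rightarrow> 'a set" where
  "trivial_isotropy_units T G0 s r =
     {u \<in> G0. \<forall>\<gamma>\<in>topspace T. s \<gamma> = u \<and> r \<gamma> = u \<longrightarrow> \<gamma> = u}"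

definition topologically_principal ::
  "'a topology \<Rightarrow> 'a set \<Rightarrow> ('a \<Rightarrow> 'a) \<Rightarrow> ('a \<Rightarrow> 'a) \<Rightarrow> bool" where
  "topologically_principal T G0 s r \<longleftrightarrow>
     (subtopology T G0) closure_of (trivial_isotropy_units T G0 s r) = G0"

definition equiv_T ::
  "'a topology \<Rightarrow> 'a set \<Rightarrow> ('a \<Rightarrow> 'a) \<Rightarrow> ('a \<Rightarrow> 'a) \<Rightarrow> ('a \<Rightarrow> bool) \<Rightarrow> ('a \<Rightarrow> bool) \<Rightarrow> bool" where
  "equiv_T T G0 s r f g \<longleftrightarrow>
     (\<forall>\<alpha>\<in>topspace T. s \<alpha> \<in> trivial_isotropy_units T G0 s r \<and>
                      r \<alpha> \<in> trivial_isotropy_units T G0 s r \<longrightarrow> f \<alpha> = g \<alpha>)"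

end

theory Submission
  imports Defs
begin

lemma lh_open:
  assumes "local_homeomorphism_map X Y f" "openin X W"
  shows "openin Y (f ` W)"
proof (subst openin_subopen, intro ballI)
  fix y assume "y \<in> f ` W"
  then obtain x where x: "x \<in> W" "y = f x" by auto
  then have "x \<in> topspace X" using assms(2) openin_subset by blast
  then obtain U where U: "openin X U" "x \<in> U" "openin Y (f ` U)"
     "homeomorphic_map (subtopology X U) (subtopology Y (f ` U)) f"
    using assms(1) unfolding local_homeomorphism_map_def by blast
  have "openin (subtopology X U) (W \<inter> U)"
    using assms(2) by (simp add: openin_subtopology_Int)
  then have "openin (subtopology Y (f ` U)) (f ` (W \<inter> U))"
    using homeomorphic_imp_open_map[OF U(4)] open_map_def by blast
  then have "openin Y (f ` (W \<inter> U))" using U(3) openin_trans_full by blast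
  then show "\<exists>T. openin Y T \<and> y \<in> T \<and> T \<subseteq> f ` W"
    using x U(2) by (intro exI[of _ "f ` (W \<inter> U)"]) auto
qed

lemma lh_cont:
  assumes "local_homeomorphism_map X Y f"
  shows "continuous_map X Y f"
  unfolding continuous_map_def
proof (intro conjI allI impI)
  show "f \<in> topspace X \<rightarrow> topspace Y" using assms unfolding local_homeomorphism_map_def by auto
  fix V assume V: "openin Y V"
  show "openin X {x \<in> topspace X. f x \<in> V}"
  proof (subst openin_subopen, intro ballI)
    fix x assume "x \<in> {x \<in> topspace X. f x \<in> V}"
    then have x: "x \<in> topspace X" "f x \<in> V" by auto
    then obtain U where U: "openin X U" "x \<in> U" "openin Y (f ` U)"
       "homeomorphic_map (subtopology X U) (subtopology Y (f ` U)) f"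
      using assms(1) unfolding local_homeomorphism_map_def by blast
    have c: "continuous_map (subtopology X U) (subtopology Y (f ` U)) f"
      using U(4) homeomorphic_imp_continuous_map by blast
    have "openin (subtopology Y (f ` U)) (f ` U \<inter> V)"
      using openin_subtopology_Int2[OF V, of "f ` U"] by (simp add: Int_commute)
    then have "openin (subtopology X U) {z \<in> topspace (subtopology X U). f z \<in> f ` U \<inter> V}"
      using openin_continuous_map_preimage[OF c] by blast
    moreover have "{z \<in> topspace (subtopology X U). f z \<in> f ` U \<inter> V} = {z \<in> U. f z \<in> V}"
      using openin_subset[OF U(1)] by auto
    ultimately have "openin X {z \<in> U. f z \<in> V}" using U(1) openin_trans_full by metis
    then show "\<exists>T. openin X T \<and> x \<in> T \<and> T \<subseteq> {x \<in> topspace X. f x \<in> V}"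
      using x U(2) openin_subset[OF U(1)] by (intro exI[of _ "{z \<in> U. f z \<in> V}"]) auto
  qed
qed

context
  fixes T :: "'a topology" and G0 :: "'a set" and s r iv :: "'a \<Rightarrow> 'a"
    and mu :: "'a \<Rightarrow> 'a \<Rightarrow> 'a"
  assumes ag: "ample_groupoid T G0 s r mu iv"
begin

lemma tg: "topological_groupoid T G0 s r mu iv" using ag ample_groupoid_def by blast
lemma gr: "groupoid T G0 s r mu iv" using tg topological_groupoid_def by blast

lemma G0sub: "G0 \<subseteq> topspace T" using gr unfolding groupoid_def Let_def by meson
lemma sr_G0: "a \<in> topspace T \<Longrightarrow> s a \<in> G0 \<and> r a \<in> G0" using gr unfolding groupoid_def Let_def by meson
lemma unit_sr: "u \<in> G0 \<Longrightarrow> s u = u \<and> r u = u" using gr unfolding groupoid_def Let_def by meson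
lemma mul_props: "a \<in> topspace T \<Longrightarrow> b \<in> topspace T \<Longrightarrow> s a = r b \<Longrightarrow>
   mu a b \<in> topspace T \<and> s (mu a b) = s b \<and> r (mu a b) = r a"
  using gr unfolding groupoid_def Let_def by meson
lemma assoc: "a \<in> topspace T \<Longrightarrow> b \<in> topspace T \<Longrightarrow> c \<in> topspace T \<Longrightarrow> s a = r b \<Longrightarrow> s b = r c \<Longrightarrow>
   mu (mu a b) c = mu a (mu b c)"
  using gr unfolding groupoid_def Let_def by meson
lemma unitlaw: "a \<in> topspace T \<Longrightarrow> mu (r a) a = a \<and> mu a (s a) = a"
  using gr unfolding groupoid_def Let_def by meson
lemma invlaw: "a \<in> topspace T \<Longrightarrow> iv a \<in> topspace T \<and> s (iv a) = r a \<and> r (iv a) = s a \<and>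
          mu a (iv a) = r a \<and> mu (iv a) a = s a"
  using gr unfolding groupoid_def Let_def by meson

lemma cs: "continuous_map T (subtopology T G0) s"
  using ag lh_cont unfolding ample_groupoid_def by blast
lemma cr: "continuous_map T (subtopology T G0) r"
  using ag lh_cont unfolding ample_groupoid_def by blast
lemma open_s: "openin T W \<Longrightarrow> openin (subtopology T G0) (s ` W)"
  using ag lh_open unfolding ample_groupoid_def by blast
lemma open_r: "openin T W \<Longrightarrow> openin (subtopology T G0) (r ` W)"
  using ag lh_open unfolding ample_groupoid_def by blast
lemma haus: "Hausdorff_space (subtopology T G0)"
  using ag unfolding ample_groupoid_def by blast
lemma topG0: "topspace (subtopology T G0) = G0" using G0sub by auto

lemma mu_nbhd:
  assumes "a \<in> topspace T" "b \<in> topspace T" "s a = r b" "openin T N" "mu a b \<in> N"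
  shows "\<exists>A B. openin T A \<and> openin T B \<and> a \<in> A \<and> b \<in> B \<and>
     (\<forall>a'\<in>A. \<forall>b'\<in>B. s a' = r b' \<longrightarrow> mu a' b' \<in> N)"
proof -
  let ?S = "subtopology (prod_topology T T) (composable_pairs T s r)"
  have c: "continuous_map ?S T (\<lambda>(a, b). mu a b)" using tg unfolding topological_groupoid_def by (rule conjunct1[OF conjunct2])
  have "openin ?S {p \<in> topspace ?S. (\<lambda>(a, b). mu a b) p \<in> N}"
    using openin_continuous_map_preimage[OF c assms(4)] .
  then obtain C where C: "openin (prod_topology T T) C"
     "{p \<in> topspace ?S. (\<lambda>(a, b). mu a b) p \<in> N} = C \<inter> composable_pairs T s r"
    unfolding openin_subtopology by blast
  have ts: "topspace ?S = (topspace T \<times> topspace T) \<inter> composable_pairs T s r"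
    by simp
  have "(a, b) \<in> {p \<in> topspace ?S. (\<lambda>(a, b). mu a b) p \<in> N}"
    unfolding ts using assms unfolding composable_pairs_def by simp
  then have abC: "(a, b) \<in> C" using C(2) by blast
  obtain A B where AB: "openin T A" "openin T B" "a \<in> A" "b \<in> B" "A \<times> B \<subseteq> C"
    using C(1)[unfolded openin_prod_topology_alt, rule_format, OF abC] by blast
  have "\<forall>a'\<in>A. \<forall>b'\<in>B. s a' = r b' \<longrightarrow> mu a' b' \<in> N"
  proof (intro ballI impI)
    fix a' b' assume h: "a' \<in> A" "b' \<in> B" "s a' = r b'"
    then have "a' \<in> topspace T" "b' \<in> topspace T" using AB openin_subset by blast+
    then have "(a', b') \<in> C \<inter> composable_pairs T s r"
      using AB h unfolding composable_pairs_def by blast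
    then have "(a', b') \<in> {p \<in> topspace ?S. (\<lambda>(a, b). mu a b) p \<in> N}" using C(2) by blast
    then show "mu a' b' \<in> N" by simp
  qed
  then show ?thesis using AB by blast
qed


lemma R_step:
  assumes U: "openin T U" and W: "openin T W" and UV: "U \<subseteq> T closure_of V"
    and a: "a \<in> U" and b: "b \<in> W" and sab: "s a = r b" and N: "openin T N" "mu a b \<in> N"
  shows "\<exists>a'\<in>U \<inter> V. \<exists>b'\<in>W. s a' = r b' \<and> mu a' b' \<in> N"
proof -
  have aT: "a \<in> topspace T" using U a openin_subset by blast
  have bT: "b \<in> topspace T" using W b openin_subset by blast
  obtain A B where AB: "openin T A" "openin T B" "a \<in> A" "b \<in> B"
     "\<forall>a'\<in>A. \<forall>b'\<in>B. s a' = r b' \<longrightarrow> mu a' b' \<in> N"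
    using mu_nbhd[OF aT bT sab N] by blast
  have R0: "openin (subtopology T G0) (r ` (B \<inter> W))" using open_r[OF openin_Int[OF AB(2) W]] .
  define O' where "O' = {y \<in> A \<inter> U. s y \<in> r ` (B \<inter> W)}"
  have oO: "openin T O'" unfolding O'_def
    using openin_continuous_map_preimage_gen[OF cs openin_Int[OF AB(1) U] R0] .
  have aO: "a \<in> O'" using AB a b sab unfolding O'_def by auto
  have "a \<in> T closure_of V" using UV a by blast
  then obtain a' where a': "a' \<in> V" "a' \<in> O'" using oO aO unfolding in_closure_of by blast
  then obtain b' where b': "b' \<in> B \<inter> W" "r b' = s a'" unfolding O'_def by auto
  have a'': "a' \<in> A" "a' \<in> U" using a' unfolding O'_def by auto
  have "mu a' b' \<in> N" using AB(5) a'' b' by auto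
  then show ?thesis using a'' a' b' by (intro bexI[of _ a'] bexI[of _ b'] conjI) auto
qed

lemma L_step:
  assumes U: "openin T U" and W: "openin T W" and UV: "U \<subseteq> T closure_of V"
    and a: "a \<in> W" and b: "b \<in> U" and sab: "s a = r b" and N: "openin T N" "mu a b \<in> N"
  shows "\<exists>a'\<in>W. \<exists>b'\<in>U \<inter> V. s a' = r b' \<and> mu a' b' \<in> N"
proof -
  have aT: "a \<in> topspace T" using W a openin_subset by blast
  have bT: "b \<in> topspace T" using U b openin_subset by blast
  obtain A B where AB: "openin T A" "openin T B" "a \<in> A" "b \<in> B"
     "\<forall>a'\<in>A. \<forall>b'\<in>B. s a' = r b' \<longrightarrow> mu a' b' \<in> N"
    using mu_nbhd[OF aT bT sab N] by blast
  have R0: "openin (subtopology T G0) (s ` (A \<inter> W))" using open_s[OF openin_Int[OF AB(1) W]] .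
  define O' where "O' = {y \<in> B \<inter> U. r y \<in> s ` (A \<inter> W)}"
  have oO: "openin T O'" unfolding O'_def
    using openin_continuous_map_preimage_gen[OF cr openin_Int[OF AB(2) U] R0] .
  have bO: "b \<in> O'" using AB a b sab unfolding O'_def by (auto intro!: image_eqI[of _ _ a])
  have "b \<in> T closure_of V" using UV b by blast
  then obtain b' where b': "b' \<in> V" "b' \<in> O'" using oO bO unfolding in_closure_of by blast
  then obtain a' where a': "a' \<in> A \<inter> W" "s a' = r b'" unfolding O'_def by auto
  have b'': "b' \<in> B" "b' \<in> U" using b' unfolding O'_def by auto
  have "mu a' b' \<in> N" using AB(5) a' b'' by auto
  then show ?thesis using a' b' b'' by (intro bexI[of _ a'] bexI[of _ b'] conjI) auto
qed


lemma rho_intro: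
  assumes "\<And>x N. x \<in> topspace T \<Longrightarrow> openin T N \<Longrightarrow> x \<in> N \<Longrightarrow> \<exists>y\<in>N. f y = g y"
  shows "rho_rel T f g"
  unfolding rho_rel_def
proof (rule antisym)
  show "T closure_of {\<alpha> \<in> topspace T. f \<alpha> = g \<alpha>} \<subseteq> topspace T" by (rule closure_of_subset_topspace)
  show "topspace T \<subseteq> T closure_of {\<alpha> \<in> topspace T. f \<alpha> = g \<alpha>}"
  proof
    fix x assume x: "x \<in> topspace T"
    show "x \<in> T closure_of {\<alpha> \<in> topspace T. f \<alpha> = g \<alpha>}" unfolding in_closure_of
    proof (intro conjI allI impI)
      show "x \<in> topspace T" using x .
      fix N assume N: "x \<in> N \<and> openin T N"
      then obtain y where y: "y \<in> N" "f y = g y" using assms x by blast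
      have "y \<in> topspace T" using y N openin_subset by blast
      then show "\<exists>y. y \<in> {\<alpha> \<in> topspace T. f \<alpha> = g \<alpha>} \<and> y \<in> N" using y by blast
    qed
  qed
qed

lemma rho_half:
  assumes U: "openin T U" and E: "\<forall>x\<in>topspace T. x \<in> T closure_of {\<alpha> \<in> topspace T. (\<alpha> \<in> U) = (\<alpha> \<in> V)}"
  shows "U \<subseteq> T closure_of V"
proof
  fix x assume xU: "x \<in> U"
  then have xT: "x \<in> topspace T" using U openin_subset by blast
  show "x \<in> T closure_of V" unfolding in_closure_of
  proof (intro conjI allI impI)
    show "x \<in> topspace T" using xT .
    fix N assume N: "x \<in> N \<and> openin T N"
    then have o: "openin T (N \<inter> U)" "x \<in> N \<inter> U" using U xU by auto
    have "x \<in> T closure_of {\<alpha> \<in> topspace T. (\<alpha> \<in> U) = (\<alpha> \<in> V)}" using E xT by blast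
    then obtain y where "y \<in> {\<alpha> \<in> topspace T. (\<alpha> \<in> U) = (\<alpha> \<in> V)}" "y \<in> N \<inter> U"
      using o unfolding in_closure_of by blast
    then show "\<exists>y. y \<in> V \<and> y \<in> N" by auto
  qed
qed

lemma rho_char:
  assumes U: "openin T U" and V: "openin T V"
  shows "rho_rel T (\<lambda>x. x \<in> U) (\<lambda>x. x \<in> V) \<longleftrightarrow> U \<subseteq> T closure_of V \<and> V \<subseteq> T closure_of U"
proof
  assume rho: "rho_rel T (\<lambda>x. x \<in> U) (\<lambda>x. x \<in> V)"
  have E: "\<forall>x\<in>topspace T. x \<in> T closure_of {\<alpha> \<in> topspace T. (\<alpha> \<in> U) = (\<alpha> \<in> V)}"
    using rho unfolding rho_rel_def by blast
  have E': "\<forall>x\<in>topspace T. x \<in> T closure_of {\<alpha> \<in> topspace T. (\<alpha> \<in> V) = (\<alpha> \<in> U)}"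
    using E by (simp add: eq_commute)
  show "U \<subseteq> T closure_of V \<and> V \<subseteq> T closure_of U"
    using rho_half[OF U E] rho_half[OF V E'] by blast
next
  assume H: "U \<subseteq> T closure_of V \<and> V \<subseteq> T closure_of U"
  show "rho_rel T (\<lambda>x. x \<in> U) (\<lambda>x. x \<in> V)"
  proof (rule rho_intro)
    fix x N assume x: "x \<in> topspace T" and N: "openin T N" "x \<in> N"
    show "\<exists>y\<in>N. (y \<in> U) = (y \<in> V)"
    proof (cases "\<exists>y. y \<in> N \<inter> U")
      case True
      then obtain y where y: "y \<in> N \<inter> U" by blast
      then have "y \<in> T closure_of V" using H by blast
      then obtain z where "z \<in> V" "z \<in> N \<inter> U"
        using y openin_Int[OF N(1) U] unfolding in_closure_of by blast
      then show ?thesis by blast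
    next
      case F1: False
      show ?thesis
      proof (cases "\<exists>y. y \<in> N \<inter> V")
        case True
        then obtain y where y: "y \<in> N \<inter> V" by blast
        then have "y \<in> T closure_of U" using H by blast
        then obtain z where "z \<in> U" "z \<in> N \<inter> V"
          using y openin_Int[OF N(1) V] unfolding in_closure_of by blast
        then show ?thesis by blast
      next
        case False
        then show ?thesis using F1 N by blast
      qed
    qed
  qed
qed

lemma conv_eq:
  assumes "U \<subseteq> topspace T" "W \<subseteq> topspace T"
  shows "B_conv T s r mu (\<lambda>x. x \<in> U) (\<lambda>x. x \<in> W) = (\<lambda>\<gamma>. \<exists>a\<in>U. \<exists>b\<in>W. s a = r b \<and> mu a b = \<gamma>)"
  unfolding B_conv_def using assms by (intro ext) blast

lemma mult_right:
  assumes U: "openin T U" and V: "openin T V" and W: "openin T W"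
    and UV: "U \<subseteq> T closure_of V" and VU: "V \<subseteq> T closure_of U"
  shows "rho_rel T (\<lambda>\<gamma>. \<exists>a\<in>U. \<exists>b\<in>W. s a = r b \<and> mu a b = \<gamma>) (\<lambda>\<gamma>. \<exists>a\<in>V. \<exists>b\<in>W. s a = r b \<and> mu a b = \<gamma>)"
proof (rule rho_intro)
  fix x N assume x: "x \<in> topspace T" and N: "openin T N" "x \<in> N"
  show "\<exists>y\<in>N. (\<exists>a\<in>U. \<exists>b\<in>W. s a = r b \<and> mu a b = y) = (\<exists>a\<in>V. \<exists>b\<in>W. s a = r b \<and> mu a b = y)"
  proof (cases "\<exists>y\<in>N. \<exists>a\<in>U. \<exists>b\<in>W. s a = r b \<and> mu a b = y")
    case True
    then obtain a b where ab: "a \<in> U" "b \<in> W" "s a = r b" "mu a b \<in> N" by blast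
    obtain a' b' where "a' \<in> U \<inter> V" "b' \<in> W" "s a' = r b'" "mu a' b' \<in> N"
      using R_step[OF U W UV ab(1,2,3) N(1) ab(4)] by blast
    then show ?thesis by (intro bexI[of _ "mu a' b'"]) blast+
  next
    case F1: False
    show ?thesis
    proof (cases "\<exists>y\<in>N. \<exists>a\<in>V. \<exists>b\<in>W. s a = r b \<and> mu a b = y")
      case True
      then obtain a b where ab: "a \<in> V" "b \<in> W" "s a = r b" "mu a b \<in> N" by blast
      obtain a' b' where "a' \<in> V \<inter> U" "b' \<in> W" "s a' = r b'" "mu a' b' \<in> N"
        using R_step[OF V W VU ab(1,2,3) N(1) ab(4)] by blast
      then show ?thesis by (intro bexI[of _ "mu a' b'"]) blast+
    next
      case False
      then show ?thesis using F1 N by blast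
    qed
  qed
qed

lemma mult_left:
  assumes U: "openin T U" and V: "openin T V" and W: "openin T W"
    and UV: "U \<subseteq> T closure_of V" and VU: "V \<subseteq> T closure_of U"
  shows "rho_rel T (\<lambda>\<gamma>. \<exists>a\<in>W. \<exists>b\<in>U. s a = r b \<and> mu a b = \<gamma>) (\<lambda>\<gamma>. \<exists>a\<in>W. \<exists>b\<in>V. s a = r b \<and> mu a b = \<gamma>)"
proof (rule rho_intro)
  fix x N assume x: "x \<in> topspace T" and N: "openin T N" "x \<in> N"
  show "\<exists>y\<in>N. (\<exists>a\<in>W. \<exists>b\<in>U. s a = r b \<and> mu a b = y) = (\<exists>a\<in>W. \<exists>b\<in>V. s a = r b \<and> mu a b = y)"
  proof (cases "\<exists>y\<in>N. \<exists>a\<in>W. \<exists>b\<in>U. s a = r b \<and> mu a b = y")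
    case True
    then obtain a b where ab: "a \<in> W" "b \<in> U" "s a = r b" "mu a b \<in> N" by blast
    obtain a' b' where "a' \<in> W" "b' \<in> U \<inter> V" "s a' = r b'" "mu a' b' \<in> N"
      using L_step[OF U W UV ab(1,2,3) N(1) ab(4)] by blast
    then show ?thesis by (intro bexI[of _ "mu a' b'"]) blast+
  next
    case F1: False
    show ?thesis
    proof (cases "\<exists>y\<in>N. \<exists>a\<in>W. \<exists>b\<in>V. s a = r b \<and> mu a b = y")
      case True
      then obtain a b where ab: "a \<in> W" "b \<in> V" "s a = r b" "mu a b \<in> N" by blast
      obtain a' b' where "a' \<in> W" "b' \<in> V \<inter> U" "s a' = r b'" "mu a' b' \<in> N"
        using L_step[OF V W VU ab(1,2,3) N(1) ab(4)] by blast
      then show ?thesis by (intro bexI[of _ "mu a' b'"]) blast+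
    next
      case False
      then show ?thesis using F1 N by blast
    qed
  qed
qed


abbreviation "TT \<equiv> trivial_isotropy_units T G0 s r"

lemma iso:
  assumes a: "\<alpha> \<in> topspace T" and b: "\<beta> \<in> topspace T" and ss: "s \<beta> = s \<alpha>" and rr: "r \<beta> = r \<alpha>"
    and t: "r \<alpha> \<in> TT"
  shows "\<beta> = \<alpha>"
proof -
  have i: "iv \<alpha> \<in> topspace T" "s (iv \<alpha>) = r \<alpha>" "r (iv \<alpha>) = s \<alpha>" "mu (iv \<alpha>) \<alpha> = s \<alpha>"
    using invlaw[OF a] by auto
  have c1: "s \<beta> = r (iv \<alpha>)" using ss i by simp
  have g: "mu \<beta> (iv \<alpha>) \<in> topspace T" "s (mu \<beta> (iv \<alpha>)) = r \<alpha>" "r (mu \<beta> (iv \<alpha>)) = r \<alpha>"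
    using mul_props[OF b i(1) c1] i rr by auto
  have g1: "mu \<beta> (iv \<alpha>) = r \<alpha>" using t g unfolding trivial_isotropy_units_def by blast
  have "\<beta> = mu \<beta> (s \<beta>)" using unitlaw[OF b] by simp
  also have "\<dots> = mu \<beta> (mu (iv \<alpha>) \<alpha>)" using ss i by simp
  also have "\<dots> = mu (mu \<beta> (iv \<alpha>)) \<alpha>" using assoc[OF b i(1) a c1 i(2)] by simp
  also have "\<dots> = \<alpha>" using g1 unitlaw[OF a] by simp
  finally show ?thesis .
qed

lemma inv_T:
  assumes y: "y \<in> topspace T" and t: "s y \<in> TT"
  shows "r y \<in> TT"
  unfolding trivial_isotropy_units_def
proof (intro CollectI conjI ballI impI)
  show ryG: "r y \<in> G0" using sr_G0[OF y] by blast
  have ryT: "r y \<in> topspace T" using ryG G0sub by blast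
  fix \<gamma> assume g: "\<gamma> \<in> topspace T" "s \<gamma> = r y \<and> r \<gamma> = r y"
  have i: "iv y \<in> topspace T" "s (iv y) = r y" "r (iv y) = s y" "mu y (iv y) = r y"
    using invlaw[OF y] by auto
  have gy: "mu \<gamma> y \<in> topspace T" "s (mu \<gamma> y) = s y" "r (mu \<gamma> y) = r y"
    using mul_props[OF g(1) y] g by auto
  have c2: "s (iv y) = r (mu \<gamma> y)" using i gy by simp
  have d: "mu (iv y) (mu \<gamma> y) \<in> topspace T" "s (mu (iv y) (mu \<gamma> y)) = s y" "r (mu (iv y) (mu \<gamma> y)) = s y"
    using mul_props[OF i(1) gy(1) c2] i gy by auto
  have d1: "mu (iv y) (mu \<gamma> y) = s y" using t d unfolding trivial_isotropy_units_def by blast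
  have c3: "s y = r (iv y)" using i by simp
  have "y = mu y (s y)" using unitlaw[OF y] by simp
  also have "\<dots> = mu y (mu (iv y) (mu \<gamma> y))" using d1 by simp
  also have "\<dots> = mu (mu y (iv y)) (mu \<gamma> y)" using assoc[OF y i(1) gy(1) c3 c2] by simp
  also have "\<dots> = mu (r y) (mu \<gamma> y)" using i by simp
  also have "\<dots> = mu (mu (r y) \<gamma>) y" using assoc[OF ryT g(1) y] unit_sr[OF ryG] g by simp
  also have "\<dots> = mu \<gamma> y" using unitlaw[OF g(1)] g by simp
  finally have gy1: "mu \<gamma> y = y" by simp
  have "\<gamma> = mu \<gamma> (s \<gamma>)" using unitlaw[OF g(1)] by simp
  also have "\<dots> = mu \<gamma> (mu y (iv y))" using g i by simp
  also have "\<dots> = mu (mu \<gamma> y) (iv y)" using assoc[OF g(1) y i(1)] g i by simp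
  also have "\<dots> = r y" using gy1 i by simp
  finally show "\<gamma> = r y" .
qed

lemma sep_pt:
  assumes f: "continuous_map X Y f" and H: "Hausdorff_space Y" and a: "a \<in> topspace X" and b: "b \<in> topspace X"
    and ne: "f b \<noteq> f a"
  shows "\<exists>P. openin X (fst P) \<and> openin X (snd P) \<and> b \<in> fst P \<and> a \<in> snd P \<and> fst P \<inter> snd P = {}"
proof -
  have fa: "f a \<in> topspace Y" using f a unfolding continuous_map_def by (meson Pi_mem)
  have fb: "f b \<in> topspace Y" using f b unfolding continuous_map_def by (meson Pi_mem)
  obtain P Q where PQ: "openin Y P" "openin Y Q" "f b \<in> P" "f a \<in> Q" "disjnt P Q"
    using H[unfolded Hausdorff_space_def, rule_format, OF conjI[OF fb conjI[OF fa ne]]] by blast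
  let ?A = "{x \<in> topspace X. f x \<in> P}" and ?B = "{x \<in> topspace X. f x \<in> Q}"
  have "openin X ?A" "openin X ?B" using openin_continuous_map_preimage[OF f] PQ by blast+
  moreover have "b \<in> ?A" "a \<in> ?B" "?A \<inter> ?B = {}" using PQ a b unfolding disjnt_def by auto
  ultimately show ?thesis by (intro exI[of _ "(?A, ?B)"]) simp
qed

lemma sep:
  assumes a: "\<alpha> \<in> topspace T" and t: "r \<alpha> \<in> TT" and K: "compactin T K" and nK: "\<alpha> \<notin> K"
  shows "\<exists>N. openin T N \<and> \<alpha> \<in> N \<and> N \<inter> K = {}"
proof -
  have "\<forall>\<beta>\<in>K. \<exists>P. openin T (fst P) \<and> openin T (snd P) \<and> \<beta> \<in> fst P \<and> \<alpha> \<in> snd P \<and> fst P \<inter> snd P = {}"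
  proof
    fix \<beta> assume bK: "\<beta> \<in> K"
    have b: "\<beta> \<in> topspace T" using K bK compactin_subset_topspace by blast
    have ne: "\<beta> \<noteq> \<alpha>" using bK nK by blast
    have "s \<beta> \<noteq> s \<alpha> \<or> r \<beta> \<noteq> r \<alpha>" using iso[OF a b _ _ t] ne by blast
    then show "\<exists>P. openin T (fst P) \<and> openin T (snd P) \<and> \<beta> \<in> fst P \<and> \<alpha> \<in> snd P \<and> fst P \<inter> snd P = {}"
    proof
      assume "s \<beta> \<noteq> s \<alpha>" then show ?thesis using sep_pt[OF cs haus a b] by blast
    next
      assume "r \<beta> \<noteq> r \<alpha>" then show ?thesis using sep_pt[OF cr haus a b] by blast
    qed
  qed
  then obtain P where P: "\<And>\<beta>. \<beta> \<in> K \<Longrightarrow> openin T (fst (P \<beta>)) \<and> openin T (snd (P \<beta>)) \<and> \<beta> \<in> fst (P \<beta>) \<and> \<alpha> \<in> snd (P \<beta>) \<and> fst (P \<beta>) \<inter> snd (P \<beta>) = {}"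
    by (metis (no_types))
  have "\<forall>U\<in>(\<lambda>\<beta>. fst (P \<beta>)) ` K. openin T U" "K \<subseteq> \<Union>((\<lambda>\<beta>. fst (P \<beta>)) ` K)" using P by auto
  then obtain \<F> where F: "finite \<F>" "\<F> \<subseteq> (\<lambda>\<beta>. fst (P \<beta>)) ` K" "K \<subseteq> \<Union>\<F>"
    using K unfolding compactin_def by meson
  then obtain K0 where K0: "K0 \<subseteq> K" "finite K0" "\<F> = (\<lambda>\<beta>. fst (P \<beta>)) ` K0"
    by (meson finite_subset_image)
  let ?N = "topspace T \<inter> \<Inter>((\<lambda>\<beta>. snd (P \<beta>)) ` K0)"
  have "openin T ?N" using K0 P by (intro openin_Int_Inter) auto
  moreover have "\<alpha> \<in> ?N" using a K0 P by auto
  moreover have "?N \<inter> K = {}"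
  proof (rule ccontr)
    assume "?N \<inter> K \<noteq> {}"
    then obtain z where z: "z \<in> ?N" "z \<in> K" by blast
    then obtain \<beta> where "\<beta> \<in> K0" "z \<in> fst (P \<beta>)" using F K0 by auto
    moreover have "z \<in> snd (P \<beta>)" using z \<open>\<beta> \<in> K0\<close> by auto
    ultimately show False using P K0 by blast
  qed
  ultimately show ?thesis by blast
qed

lemma sep_union:
  assumes a: "\<alpha> \<in> topspace T" and t: "r \<alpha> \<in> TT" and F: "finite F" "\<forall>K\<in>F. compactin T K"
    and nF: "\<alpha> \<notin> \<Union>F"
  shows "\<alpha> \<notin> T closure_of \<Union>F"
proof -
  have "\<forall>K\<in>F. \<exists>N. openin T N \<and> \<alpha> \<in> N \<and> N \<inter> K = {}" using sep[OF a t] F nF by blast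
  then obtain N where N: "\<And>K. K \<in> F \<Longrightarrow> openin T (N K) \<and> \<alpha> \<in> N K \<and> N K \<inter> K = {}" by metis
  let ?M = "topspace T \<inter> \<Inter>(N ` F)"
  have "openin T ?M" using F N by (intro openin_Int_Inter) auto
  moreover have "\<alpha> \<in> ?M" using a N by auto
  moreover have "?M \<inter> \<Union>F = {}" using N by blast
  ultimately show ?thesis unfolding in_closure_of by blast
qed

lemma dens:
  assumes tp: "topologically_principal T G0 s r" and S: "openin T S"
    and H: "\<forall>y\<in>S. s y \<in> TT \<and> r y \<in> TT \<longrightarrow> y \<in> V"
  shows "S \<subseteq> T closure_of V"
proof
  fix x assume xS: "x \<in> S"
  then have xT: "x \<in> topspace T" using S openin_subset by blast
  show "x \<in> T closure_of V" unfolding in_closure_of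
  proof (intro conjI allI impI)
    show "x \<in> topspace T" using xT .
    fix N assume N: "x \<in> N \<and> openin T N"
    then have o: "openin T (N \<inter> S)" "x \<in> N \<inter> S" using S xS by auto
    have so: "openin (subtopology T G0) (s ` (N \<inter> S))" using open_s[OF o(1)] .
    have "s x \<in> G0" using sr_G0[OF xT] by blast
    then have "s x \<in> (subtopology T G0) closure_of TT" using tp unfolding topologically_principal_def by simp
    then have cl: "\<forall>T'. s x \<in> T' \<and> openin (subtopology T G0) T' \<longrightarrow> (\<exists>y. y \<in> TT \<and> y \<in> T')"
      unfolding in_closure_of by (rule conjunct2)
    have "s x \<in> s ` (N \<inter> S)" using o(2) by (rule imageI)
    then obtain u where u: "u \<in> TT" "u \<in> s ` (N \<inter> S)"
      using cl[rule_format, OF conjI[OF _ so]] by blast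
    then obtain y where y: "y \<in> N \<inter> S" "s y = u" by blast
    have yT: "y \<in> topspace T" using y S openin_subset by blast
    have sy: "s y \<in> TT" using u y by simp
    have "r y \<in> TT" using inv_T[OF yT sy] .
    then have "y \<in> V" using H y sy by blast
    then show "\<exists>y. y \<in> V \<and> y \<in> N" using y by blast
  qed
qed


lemma stein_repr:
  assumes "f \<in> steinberg_B T s r"
  shows "\<exists>U F. openin T U \<and> finite F \<and> (\<forall>K\<in>F. compactin T K) \<and> U = \<Union>F \<and> f = (\<lambda>x. x \<in> U)"
proof -
  obtain F where F: "finite F" "\<forall>U\<in>F. compact_open_bisection T s r U" "f = (\<lambda>x. \<exists>U\<in>F. x \<in> U)"
    using assms unfolding steinberg_B_def by blast
  have "openin T (\<Union>F)" using F(2) unfolding compact_open_bisection_def by blast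
  moreover have "\<forall>K\<in>F. compactin T K" using F(2) unfolding compact_open_bisection_def by blast
  moreover have "f = (\<lambda>x. x \<in> \<Union>F)" using F(3) by auto
  ultimately show ?thesis using F(1) by blast
qed

lemma c_refl: "rho_rel T f f"
  unfolding rho_rel_def by (simp add: closure_of_topspace)

lemma c_sym: "rho_rel T f g \<Longrightarrow> rho_rel T g f"
  unfolding rho_rel_def by (simp add: eq_commute)

lemma c_trans:
  assumes "f \<in> steinberg_B T s r" "g \<in> steinberg_B T s r" "h \<in> steinberg_B T s r"
    and fg: "rho_rel T f g" and gh: "rho_rel T g h"
  shows "rho_rel T f h"
proof -
  obtain U where U: "openin T U" "f = (\<lambda>x. x \<in> U)" using stein_repr[OF assms(1)] by blast
  obtain V where V: "openin T V" "g = (\<lambda>x. x \<in> V)" using stein_repr[OF assms(2)] by blast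
  obtain W where W: "openin T W" "h = (\<lambda>x. x \<in> W)" using stein_repr[OF assms(3)] by blast
  have 1: "U \<subseteq> T closure_of V" "V \<subseteq> T closure_of U" using fg rho_char[OF U(1) V(1)] U V by blast+
  have 2: "V \<subseteq> T closure_of W" "W \<subseteq> T closure_of V" using gh rho_char[OF V(1) W(1)] V W by blast+
  have c1: "T closure_of V \<subseteq> T closure_of W"
    using closure_of_mono[OF 2(1), of T] by (simp add: closure_of_closure_of)
  have c2: "T closure_of V \<subseteq> T closure_of U"
    using closure_of_mono[OF 1(2), of T] by (simp add: closure_of_closure_of)
  have "U \<subseteq> T closure_of W" using subset_trans[OF 1(1) c1] .
  moreover have "W \<subseteq> T closure_of U" using subset_trans[OF 2(2) c2] .
  ultimately show ?thesis using rho_char[OF U(1) W(1)] U W by blast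
qed

lemma c_comp:
  assumes "f \<in> steinberg_B T s r" "g \<in> steinberg_B T s r" "h \<in> steinberg_B T s r"
    and fg: "rho_rel T f g"
  shows "rho_rel T (B_add f h) (B_add g h) \<and> rho_rel T (B_conv T s r mu h f) (B_conv T s r mu h g) \<and>
         rho_rel T (B_conv T s r mu f h) (B_conv T s r mu g h)"
proof -
  obtain U where U: "openin T U" "f = (\<lambda>x. x \<in> U)" using stein_repr[OF assms(1)] by blast
  obtain V where V: "openin T V" "g = (\<lambda>x. x \<in> V)" using stein_repr[OF assms(2)] by blast
  obtain W where W: "openin T W" "h = (\<lambda>x. x \<in> W)" using stein_repr[OF assms(3)] by blast
  have 1: "U \<subseteq> T closure_of V" "V \<subseteq> T closure_of U" using fg rho_char[OF U(1) V(1)] U V by blast+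
  have sub: "U \<subseteq> topspace T" "V \<subseteq> topspace T" "W \<subseteq> topspace T" using U V W openin_subset by blast+
  have add: "B_add f h = (\<lambda>x. x \<in> U \<union> W)" "B_add g h = (\<lambda>x. x \<in> V \<union> W)"
    unfolding B_add_def U V W by auto
  have "U \<union> W \<subseteq> T closure_of (V \<union> W)"
    unfolding closure_of_Un using 1(1) closure_of_subset[OF sub(3)] by blast
  moreover have "V \<union> W \<subseteq> T closure_of (U \<union> W)"
    unfolding closure_of_Un using 1(2) closure_of_subset[OF sub(3)] by blast
  ultimately have A: "rho_rel T (B_add f h) (B_add g h)"
    unfolding add using rho_char[OF openin_Un[OF U(1) W(1)] openin_Un[OF V(1) W(1)]] by blast
  have L: "rho_rel T (B_conv T s r mu h f) (B_conv T s r mu h g)"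
    unfolding U(2) V(2) W(2) conv_eq[OF sub(3) sub(1)] conv_eq[OF sub(3) sub(2)]
    using mult_left[OF U(1) V(1) W(1) 1] .
  have R: "rho_rel T (B_conv T s r mu f h) (B_conv T s r mu g h)"
    unfolding U(2) V(2) W(2) conv_eq[OF sub(1) sub(3)] conv_eq[OF sub(2) sub(3)]
    using mult_right[OF U(1) V(1) W(1) 1] .
  show ?thesis using A L R by blast
qed

lemma part2:
  assumes tp: "topologically_principal T G0 s r"
    and f: "f \<in> steinberg_B T s r" and g: "g \<in> steinberg_B T s r"
  shows "rho_rel T f g \<longleftrightarrow> equiv_T T G0 s r f g"
proof -
  obtain U F where U: "openin T U" "finite F" "\<forall>K\<in>F. compactin T K" "U = \<Union>F" "f = (\<lambda>x. x \<in> U)"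
    using stein_repr[OF f] by blast
  obtain V G where V: "openin T V" "finite G" "\<forall>K\<in>G. compactin T K" "V = \<Union>G" "g = (\<lambda>x. x \<in> V)"
    using stein_repr[OF g] by blast
  show ?thesis
  proof
    assume "rho_rel T f g"
    then have 1: "U \<subseteq> T closure_of V" "V \<subseteq> T closure_of U" using rho_char[OF U(1) V(1)] U V by blast+
    show "equiv_T T G0 s r f g" unfolding equiv_T_def
    proof (intro ballI impI)
      fix \<alpha> assume a: "\<alpha> \<in> topspace T" and t: "s \<alpha> \<in> TT \<and> r \<alpha> \<in> TT"
      have "\<alpha> \<in> U \<Longrightarrow> \<alpha> \<notin> V \<Longrightarrow> False"
        using 1(1) sep_union[OF a _ V(2) V(3)] t V(4) by blast
      moreover have "\<alpha> \<in> V \<Longrightarrow> \<alpha> \<notin> U \<Longrightarrow> False"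
        using 1(2) sep_union[OF a _ U(2) U(3)] t U(4) by blast
      ultimately show "f \<alpha> = g \<alpha>" using U(5) V(5) by blast
    qed
  next
    assume e: "equiv_T T G0 s r f g"
    have "\<forall>y\<in>U. s y \<in> TT \<and> r y \<in> TT \<longrightarrow> y \<in> V"
      using e U(1,5) V(5) openin_subset unfolding equiv_T_def by blast
    moreover have "\<forall>y\<in>V. s y \<in> TT \<and> r y \<in> TT \<longrightarrow> y \<in> U"
      using e V(1,5) U(5) openin_subset unfolding equiv_T_def by blast
    ultimately show "rho_rel T f g"
      using dens[OF tp U(1)] dens[OF tp V(1)] rho_char[OF U(1) V(1)] U(5) V(5) by blast
  qed
qed

lemma main:
  "congruence_on (steinberg_B T s r) B_add (B_conv T s r mu) (rho_rel T) \<and>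
         (topologically_principal T G0 s r \<longrightarrow>
         (\<forall>f\<in>steinberg_B T s r. \<forall>g\<in>steinberg_B T s r.
            rho_rel T f g \<longleftrightarrow> equiv_T T G0 s r f g))"
proof
  show "congruence_on (steinberg_B T s r) B_add (B_conv T s r mu) (rho_rel T)"
    unfolding congruence_on_def using c_refl c_sym c_trans c_comp by blast
  show "topologically_principal T G0 s r \<longrightarrow>
         (\<forall>f\<in>steinberg_B T s r. \<forall>g\<in>steinberg_B T s r.
            rho_rel T f g \<longleftrightarrow> equiv_T T G0 s r f g)"
    using part2 by blast
qed

end

theorem lemma3p7:
  fixes T :: "'a topology" and G0 :: "'a set" and s r iv :: "'a \<Rightarrow> 'a"
    and mu :: "'a \<Rightarrow> 'a \<Rightarrow> 'a"
  assumes "ample_groupoid T G0 s r mu iv"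
  shows "congruence_on (steinberg_B T s r) B_add (B_conv T s r mu) (rho_rel T) \<and>
         (topologically_principal T G0 s r \<longrightarrow>
         (\<forall>f\<in>steinberg_B T s r. \<forall>g\<in>steinberg_B T s r.
            rho_rel T f g \<longleftrightarrow> equiv_T T G0 s r f g))"
  using main[OF assms] .

end
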